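(* Let $(\frac pq,\frac rs)$ be a Farey pair of order $n$ with $2\le q<s$. Put $d=\lfloor n/q\rfloor$, $\delta=\gcd(d,s)$, and define $s_1,d_1,r_1$ and $j_0\in\{0,\dots,\delta-1\}$ by $s=s_1\delta$, $d=d_1\delta$, $r=r_1\delta+j_0$; let $\hat r\in\{0,\dots,s_1-1\}$ and $l_0\in\{0,\dots,d_1-1\}$ be the nonnegative integers with $r_1=d_1\hat r-l_0s_1$. For $j\in\{0,\dots,\delta-1\}$ let $g_{1,j}(t)=t^{qd_1}-t^{qd_1-s_1}e^{2\pi ij/\delta}$ and $\hat g_{1,j}(t)=t^{qd_1}-t^{qd_1-s_1}e^{2\pi ij/(\delta d_1)}$. Then $e^{2\pi i r/s}$ is a root of $g_{1,j}$ if and only if $j=j_0$, and the root $\lambda$ of $\hat g_{1,j_0}$ satisfying $\lambda^{d_1}=e^{2\pi ir/s}$ is $\lambda=e^{\frac{2\pi i}{d_1}(\frac rs+l_0)}$.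
   Context: $\mathcal{F}_n=\{p/q:0\le p<q\le n,\ \gcd(p,q)=1\}$; a Farey pair of order $n$ is a pair $(\frac pq,\frac rs)$ of elements of $\mathcal F_n$ with $\frac pq<\frac rs$ and no element of $\mathcal F_n$ strictly between them. $g_{1,j},\hat g_{1,j}$ are the functions $g_{\alpha,j}(t)=(t^q-\beta)^{d_1}-\alpha^{d_1}t^{qd_1-s_1}e^{2\pi ij/\delta}$ and $\hat g_{\alpha,j}(t)=t^{qd_1}-\beta-\alpha t^{qd_1-s_1}e^{2\pi ij/(\delta d_1)}$ at $\alpha=1$, $\beta=0$, regarded as rational functions of $t$. *)

theory Defs
  imports "HOL-Analysis.Analysis"
begin

definition farey :: "nat \<Rightarrow> rat set" where
  "farey n = {of_nat p / of_nat q | p q. p < q \<and> q \<le> n \<and> coprime p q}"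

definition farey_pair :: "nat \<Rightarrow> nat \<Rightarrow> nat \<Rightarrow> nat \<Rightarrow> nat \<Rightarrow> bool" where
  "farey_pair n p q r s \<longleftrightarrow>
     p < q \<and> q \<le> n \<and> coprime p q \<and> r < s \<and> s \<le> n \<and> coprime r s \<and>
     (of_nat p / of_nat q :: rat) < of_nat r / of_nat s \<and>
     \<not> (\<exists>x\<in>farey n. of_nat p / of_nat q < x \<and> x < of_nat r / of_nat s)"

text \<open>g_{1,j}(t) = t^(q d1) - t^(q d1 - s1) e^(2 pi i j/delta), a rational function of t
  (the exponent q d1 - s1 may be negative, hence powi).\<close>
definition g1 :: "nat \<Rightarrow> nat \<Rightarrow> nat \<Rightarrow> nat \<Rightarrow> nat \<Rightarrow> complex \<Rightarrow> complex" where
  "g1 q d1 s1 \<delta> j t = t ^ (q * d1)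
     - t powi (int (q * d1) - int s1) * exp (2 * pi * \<i> * of_nat j / of_nat \<delta>)"

definition g1_hat :: "nat \<Rightarrow> nat \<Rightarrow> nat \<Rightarrow> nat \<Rightarrow> nat \<Rightarrow> complex \<Rightarrow> complex" where
  "g1_hat q d1 s1 \<delta> j t = t ^ (q * d1)
     - t powi (int (q * d1) - int s1) * exp (2 * pi * \<i> * of_nat j / (of_nat \<delta> * of_nat d1))"

definition is_root :: "(complex \<Rightarrow> complex) \<Rightarrow> complex \<Rightarrow> bool" where
  "is_root f t \<longleftrightarrow> t \<noteq> 0 \<and> f t = 0"

end

theory Submission
  imports Defs
begin

lemma root_iff_aux:
  fixes t c :: complex
  assumes "t \<noteq> 0"
  shows "(t ^ m - t powi (int m - int k) * c = 0) \<longleftrightarrow> t ^ k = c"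
proof -
  have "t powi (int m) = t powi (int m - int k) * t powi (int k)"
    using power_int_add[of t "int m - int k" "int k"] assms by simp
  hence "t ^ m = t powi (int m - int k) * t ^ k" by (simp add: power_int_of_nat)
  hence "t ^ m - t powi (int m - int k) * c = t powi (int m - int k) * (t ^ k - c)"
    by (simp add: algebra_simps)
  moreover have "t powi (int m - int k) \<noteq> 0" using assms by simp
  ultimately show ?thesis using assms by simp
qed

lemma coprime_unity:
  fixes w :: complex
  assumes "coprime a b" "a \<noteq> 0" "w ^ a = 1" "w ^ b = 1"
  shows "w = 1"
proof -
  obtain x y where xy: "a * x = b * y + gcd a b" using bezout_nat[OF assms(2)] by blast
  have g: "gcd a b = 1" using assms(1) by simp
  have "w ^ (a * x) = 1" using assms(3) by (simp add: power_mult)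
  moreover have "w ^ (a * x) = w ^ (b * y) * w" using xy g by (simp add: power_add)
  moreover have "w ^ (b * y) = 1" using assms(4) by (simp add: power_mult)
  ultimately show ?thesis by simp
qed

theorem lemma4p5:
  fixes n p q r s d \<delta> s1 d1 r1 j0 rhat l0 :: nat
  assumes fp: "farey_pair n p q r s"
    and q2: "2 \<le> q" and qs: "q < s"
    and d_def: "d = n div q"
    and delta_def: "\<delta> = gcd d s"
    and s_eq: "s = s1 * \<delta>" and d_eq: "d = d1 * \<delta>"
    and r_eq: "r = r1 * \<delta> + j0" and j0_lt: "j0 < \<delta>"
    and rhat_lt: "rhat < s1" and l0_lt: "l0 < d1"
    and r1_eq: "int r1 = int d1 * int rhat - int l0 * int s1"
  shows "(\<forall>j<\<delta>. is_root (g1 q d1 s1 \<delta> j) (exp (2 * pi * \<i> * of_nat r / of_nat s))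
                \<longleftrightarrow> j = j0)
     \<and> (\<forall>lam. (is_root (g1_hat q d1 s1 \<delta> j0) lam \<and> lam ^ d1 = exp (2 * pi * \<i> * of_nat r / of_nat s))
             \<longleftrightarrow> lam = exp (2 * pi * \<i> / of_nat d1 * (of_nat r / of_nat s + of_nat l0)))"
proof -
  have dpos: "\<delta> > 0" using j0_lt by simp
  have s1pos: "s1 > 0" using rhat_lt by simp
  have d1pos: "d1 > 0" using l0_lt by simp
  have "\<delta> * gcd d1 s1 = \<delta> * 1"
    using delta_def s_eq d_eq by (simp add: gcd_mult_distrib_nat mult.commute)
  hence cop: "coprime d1 s1" using dpos by (simp add: coprime_iff_gcd_eq_1)
  define z where "z = exp (2 * pi * \<i> * of_nat r / of_nat s)"
  have z0: "z \<noteq> 0" unfolding z_def by simp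
  have "z ^ s1 = exp (of_nat s1 * (2 * pi * \<i> * of_nat r / of_nat s))"
    unfolding z_def by (simp only: exp_of_nat_mult)
  also have "\<dots> = exp (2 * of_real pi * \<i> * of_nat r / of_nat \<delta>)"
    using s1pos dpos by (simp add: s_eq field_simps)
  also have "\<dots> = exp (2 * of_real pi * \<i> * of_nat j0 / of_nat \<delta>)"
    using dpos complex_root_unity_eq[of \<delta> r j0] r_eq j0_lt by simp
  finally have zs1: "z ^ s1 = exp (2 * of_real pi * \<i> * of_nat j0 / of_nat \<delta>)" .
  have part1: "\<forall>j<\<delta>. is_root (g1 q d1 s1 \<delta> j) z \<longleftrightarrow> j = j0"
  proof (intro allI impI)
    fix j assume jl: "j < \<delta>"
    have "is_root (g1 q d1 s1 \<delta> j) z \<longleftrightarrow> z ^ s1 = exp (2 * pi * \<i> * of_nat j / of_nat \<delta>)"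
      unfolding is_root_def g1_def root_iff_aux[OF z0] using z0 by simp
    also have "\<dots> \<longleftrightarrow> j0 mod \<delta> = j mod \<delta>"
      using zs1 complex_root_unity_eq[of \<delta> j0 j] dpos by simp
    also have "\<dots> \<longleftrightarrow> j = j0" using jl j0_lt by auto
    finally show "is_root (g1 q d1 s1 \<delta> j) z \<longleftrightarrow> j = j0" .
  qed
  define c where "c = exp (2 * pi * \<i> * of_nat j0 / (of_nat \<delta> * of_nat d1))"
  define lam0 where "lam0 = exp (2 * pi * \<i> / of_nat d1 * (of_nat r / of_nat s + of_nat l0))"
  have l00: "lam0 \<noteq> 0" unfolding lam0_def by simp
  have "lam0 ^ d1 = exp (of_nat d1 * (2 * pi * \<i> / of_nat d1 * (of_nat r / of_nat s + of_nat l0)))"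
    unfolding lam0_def by (simp only: exp_of_nat_mult)
  also have "\<dots> = exp (2 * pi * \<i> * of_nat r / of_nat s + 2 * pi * \<i> * of_nat l0)"
  proof -
    have "(of_nat d1 :: complex) \<noteq> 0" using d1pos by simp
    hence "of_nat d1 * (2 * pi * \<i> / of_nat d1 * (of_nat r / of_nat s + of_nat l0))
        = (2 * pi * \<i>) * (of_nat r / of_nat s + of_nat l0)" by simp
    also have "\<dots> = 2 * pi * \<i> * of_nat r / of_nat s + 2 * pi * \<i> * of_nat l0"
      by (simp add: distrib_left)
    finally show ?thesis by simp
  qed
  also have "\<dots> = z * exp (of_nat l0 * (2 * of_real pi * \<i>))"
    unfolding z_def by (simp add: exp_add mult.commute)
  also have "\<dots> = z" by (simp only: exp_of_nat_mult exp_two_pi_i power_one mult_1_right)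
  finally have l0d1: "lam0 ^ d1 = z" .
  have key: "r + \<delta> * s1 * l0 = \<delta> * d1 * rhat + j0"
  proof -
    have "int r + int \<delta> * int s1 * int l0 = int \<delta> * int d1 * int rhat + int j0"
    proof -
      have "int \<delta> * int r1 = int \<delta> * (int d1 * int rhat - int l0 * int s1)" using r1_eq by simp
      thus ?thesis using r_eq by (simp add: algebra_simps)
    qed
    hence "int (r + \<delta> * s1 * l0) = int (\<delta> * d1 * rhat + j0)" by simp
    thus ?thesis by (simp only: of_nat_eq_iff)
  qed
  have "lam0 ^ s1 = exp (of_nat s1 * (2 * pi * \<i> / of_nat d1 * (of_nat r / of_nat s + of_nat l0)))"
    unfolding lam0_def by (simp only: exp_of_nat_mult)
  also have "\<dots> = exp (2 * of_real pi * \<i> * of_nat (r + \<delta> * s1 * l0) / of_nat (\<delta> * d1))"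
  proof -
    have a: "(of_nat s1 :: complex) \<noteq> 0" "(of_nat d1 :: complex) \<noteq> 0" "(of_nat \<delta> :: complex) \<noteq> 0"
      using s1pos dpos d1pos by auto
    have "of_nat s1 * (2 * pi * \<i> / of_nat d1 * (of_nat r / of_nat s + of_nat l0))
      = 2 * of_real pi * \<i> * of_nat (r + \<delta> * s1 * l0) / (of_nat (\<delta> * d1) :: complex)"
      using a by (simp add: s_eq field_simps)
    thus ?thesis by simp
  qed
  also have "\<dots> = exp (2 * of_real pi * \<i> * of_nat j0 / of_nat (\<delta> * d1))"
    unfolding key using complex_root_unity_eq[of "\<delta> * d1" "\<delta> * d1 * rhat + j0" j0] dpos d1pos j0_lt
    by (simp add: less_le_trans[of j0 \<delta> "\<delta> * d1"])
  also have "\<dots> = c" unfolding c_def by simp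
  finally have l0s1: "lam0 ^ s1 = c" .
  have part2: "\<forall>lam. (is_root (g1_hat q d1 s1 \<delta> j0) lam \<and> lam ^ d1 = z) \<longleftrightarrow> lam = lam0"
  proof (intro allI iffI)
    fix lam assume "is_root (g1_hat q d1 s1 \<delta> j0) lam \<and> lam ^ d1 = z"
    hence ln0: "lam \<noteq> 0" and ld1: "lam ^ d1 = z" and "g1_hat q d1 s1 \<delta> j0 lam = 0"
      unfolding is_root_def by auto
    hence ls1: "lam ^ s1 = c" unfolding g1_hat_def c_def root_iff_aux[OF ln0] by blast
    have "(lam / lam0) ^ d1 = 1" using ld1 l0d1 z0 by (simp add: power_divide)
    moreover have "(lam / lam0) ^ s1 = 1" using ls1 l0s1
      by (simp add: power_divide c_def)
    ultimately have "lam / lam0 = 1" using coprime_unity[OF cop] d1pos by blast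
    thus "lam = lam0" using l00 by simp
  next
    fix lam assume "lam = lam0"
    thus "is_root (g1_hat q d1 s1 \<delta> j0) lam \<and> lam ^ d1 = z"
    proof -
      have "g1_hat q d1 s1 \<delta> j0 lam0 = 0"
        unfolding g1_hat_def root_iff_aux[OF l00] using l0s1 c_def by simp
      thus ?thesis unfolding is_root_def using \<open>lam = lam0\<close> l00 l0d1 by simp
    qed
  qed
  show ?thesis using part1 part2 unfolding z_def lam0_def by simp
qed

end
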